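(* Let $\kappa$ be a cardinal with $\mathrm{cf}(\kappa) > \omega$, let $\mathcal{A}$ and $\mathcal{B}$ be almost disjoint families on $\omega$ of size $\kappa$, and let $h : \mathcal{A} \to \mathcal{B}$ be a bijection of dense oscillation. Then there is no homeomorphism from $\Psi(\mathcal{A})$ onto $\Psi(\mathcal{B})$ that extends $h$.
   Context: An almost disjoint (AD) family on $\omega$ is a family of infinite subsets of $\omega$ any two distinct members of which have finite intersection. For an AD family $\mathcal{A}$, the space $\Psi(\mathcal{A})$ has underlying set $\omega \cup \mathcal{A}$; points of $\omega$ are isolated, and basic neighborhoods of a point $x \in \mathcal{A}$ are the sets $\{x\} \cup (x \setminus F)$ with $F \subseteq \omega$ finite. For AD families $\mathcal{A}, \mathcal{B}$ of size $\kappa$, a bijection $h : \mathcal{A} \to \mathcal{B}$ is of dense oscillation if for every $\mathcal{A}' \subseteq \mathcal{A}$ with $|\mathcal{A}'| = \kappa$ there are $x, y, z \in \mathcal{A}'$ such that $|(x \cap z) \setminus (x \cap y)| \neq |(h(x) \cap h(z)) \setminus (h(x) \cap h(y))|$. *)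

theory Defs
  imports "HOL-Analysis.Analysis"
begin

definition AD_family :: "nat set set \<Rightarrow> bool" where
  "AD_family \<A> \<longleftrightarrow> (\<forall>x\<in>\<A>. infinite x) \<and> (\<forall>x\<in>\<A>. \<forall>y\<in>\<A>. x \<noteq> y \<longrightarrow> finite (x \<inter> y))"

text \<open>cf(|A|) > omega: every cofinal subset of the initial well-order |A| is uncountable
  (cf of a cardinal = least size of a cofinal subset).\<close>
definition uncountable_cof :: "'a set \<Rightarrow> bool" where
  "uncountable_cof A \<longleftrightarrow>
     (\<forall>X. X \<subseteq> A \<and> (\<forall>a\<in>A. \<exists>x\<in>X. (a, x) \<in> card_of A) \<longrightarrow> uncountable X)"

definition dense_oscillation :: "nat set set \<Rightarrow> (nat set \<Rightarrow> nat set) \<Rightarrow> bool" where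
  "dense_oscillation \<A> h \<longleftrightarrow>
     (\<forall>\<A>'. \<A>' \<subseteq> \<A> \<and> (card_of \<A>', card_of \<A>) \<in> ordIso \<longrightarrow>
        (\<exists>x\<in>\<A>'. \<exists>y\<in>\<A>'. \<exists>z\<in>\<A>'.
           (card_of ((x \<inter> z) - (x \<inter> y)), card_of ((h x \<inter> h z) - (h x \<inter> h y))) \<notin> ordIso))"

text \<open>Psi-space: points of omega are Inl n, points of A are Inr a.\<close>
definition psi_carrier :: "nat set set \<Rightarrow> (nat + nat set) set" where
  "psi_carrier \<A> = range Inl \<union> Inr ` \<A>"

definition psi_open :: "nat set set \<Rightarrow> (nat + nat set) set \<Rightarrow> bool" where
  "psi_open \<A> U \<longleftrightarrow> U \<subseteq> psi_carrier \<A> \<and>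
     (\<forall>a\<in>\<A>. Inr a \<in> U \<longrightarrow> (\<exists>F. finite F \<and> Inl ` (a - F) \<subseteq> U))"

lemma istopology_psi_open: "istopology (psi_open \<A>)"
  unfolding istopology_def
proof (intro conjI allI impI)
  fix S T assume S: "psi_open \<A> S" and T: "psi_open \<A> T"
  show "psi_open \<A> (S \<inter> T)"
    unfolding psi_open_def
  proof (intro conjI ballI impI)
    show "S \<inter> T \<subseteq> psi_carrier \<A>" using S unfolding psi_open_def by (simp add: le_infI1)
  next
    fix a assume a: "a \<in> \<A>" "Inr a \<in> S \<inter> T"
    have "\<exists>F. finite F \<and> Inl ` (a - F) \<subseteq> S" using S a unfolding psi_open_def by simp
    then obtain F where F: "finite F" "Inl ` (a - F) \<subseteq> S" by (elim exE conjE)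
    have "\<exists>G. finite G \<and> Inl ` (a - G) \<subseteq> T" using T a unfolding psi_open_def by simp
    then obtain G where G: "finite G" "Inl ` (a - G) \<subseteq> T" by (elim exE conjE)
    have "Inl ` (a - (F \<union> G)) \<subseteq> S \<inter> T" using F(2) G(2) by (simp add: image_subset_iff)
    then show "\<exists>F. finite F \<and> Inl ` (a - F) \<subseteq> S \<inter> T"
      using F(1) G(1) by (intro exI[of _ "F \<union> G"]) simp
  qed
next
  fix K assume K: "\<forall>S\<in>K. psi_open \<A> S"
  show "psi_open \<A> (\<Union>K)"
    unfolding psi_open_def
  proof (intro conjI ballI impI)
    show "\<Union>K \<subseteq> psi_carrier \<A>" using K unfolding psi_open_def by (simp add: Union_least)
  next
    fix a assume "a \<in> \<A>" "Inr a \<in> \<Union>K"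
    then obtain S where "S \<in> K" "Inr a \<in> S" by blast
    have "\<exists>F. finite F \<and> Inl ` (a - F) \<subseteq> S"
      using K \<open>S \<in> K\<close> \<open>Inr a \<in> S\<close> \<open>a \<in> \<A>\<close> unfolding psi_open_def by simp
    then obtain F where F: "finite F" "Inl ` (a - F) \<subseteq> S" by (elim exE conjE)
    have "Inl ` (a - F) \<subseteq> \<Union>K" using F(2) \<open>S \<in> K\<close> by (rule subset_trans[OF _ Union_upper])
    then show "\<exists>F. finite F \<and> Inl ` (a - F) \<subseteq> \<Union>K" using F(1) by (intro exI[of _ F]) simp
  qed
qed

definition Psi :: "nat set set \<Rightarrow> (nat + nat set) topology" where
  "Psi \<A> = topology (psi_open \<A>)"

lemma openin_Psi: "openin (Psi \<A>) U \<longleftrightarrow> psi_open \<A> U"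
  unfolding Psi_def using istopology_psi_open by (simp add: topology_inverse')

end

theory Submission
  imports Defs "HOL-Library.Countable_Set" "HOL-Library.Infinite_Set" "HOL-Library.Countable_Set_Type"
begin

unbundle cardinal_syntax

lemma card_class:
  fixes A :: "'a set" and key :: "'a \<Rightarrow> 'k"
  assumes cof: "uncountable_cof A" and cnt: "countable (key ` A)"
  shows "\<exists>k. ( |{a\<in>A. key a = k}|, |A| ) \<in> ordIso"
proof (rule ccontr)
  assume nk: "\<not> ?thesis"
  let ?r = "|A|"
  define P where "P k = {a\<in>A. key a = k}" for k
  have WO: "Well_order ?r" by (rule card_of_Well_order)
  have wo: "wo_rel ?r" using WO unfolding wo_rel_def .
  have less: "|P k| <o ?r" for k
  proof -
    have "|P k| \<le>o ?r" unfolding P_def by (rule card_of_mono1) auto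
    moreover have "\<not> |P k| =o ?r" using nk unfolding P_def by blast
    ultimately show ?thesis using ordLeq_iff_ordLess_or_ordIso by blast
  qed
  have ex1: "\<exists>b. b \<in> A \<and> |P k| \<le>o |underS ?r b|" for k
  proof -
    obtain b where b: "b \<in> Field ?r" and iso: "|P k| =o Restr ?r (underS ?r b)"
      using less[of k] ordLess_iff_ordIso_Restr[OF WO card_of_Well_order] by blast
    then obtain f where "iso |P k| (Restr ?r (underS ?r b)) f" unfolding ordIso_def by auto
    hence "bij_betw f (P k) (Field (Restr ?r (underS ?r b)))" unfolding iso_def Field_card_of by simp
    hence "inj_on f (P k) \<and> f ` P k \<subseteq> underS ?r b"
      using Field_Restr_subset[of ?r "underS ?r b"] unfolding bij_betw_def by simp
    hence "|P k| \<le>o |underS ?r b|" unfolding card_of_ordLeq[symmetric] by blast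
    thus ?thesis using b unfolding Field_card_of by blast
  qed
  have "\<forall>k. \<exists>b. b \<in> A \<and> |P k| \<le>o |underS ?r b|" using ex1 by blast
  from choice[OF this] obtain b where bb: "\<forall>k. b k \<in> A \<and> |P k| \<le>o |underS ?r (b k)|" by blast
  have b: "b k \<in> A" for k using bb[rule_format, of k] by (rule conjunct1)
  have bl: "|P k| \<le>o |underS ?r (b k)|" for k using bb[rule_format, of k] by (rule conjunct2)
  have cof': "\<forall>X. X \<subseteq> A \<and> (\<forall>a\<in>A. \<exists>x\<in>X. (a, x) \<in> ?r) \<longrightarrow> uncountable X"
    using cof by (simp only: uncountable_cof_def)
  have rr: "(a, a) \<in> ?r" if "a \<in> A" for a
    using refl_onD[OF wo_rel.REFL[OF wo], of a] that by (simp only: Field_card_of)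
  have uncA: "uncountable A"
  proof (rule mp[OF spec[OF cof', of A]], rule conjI)
    show "\<forall>a\<in>A. \<exists>x\<in>A. (a, x) \<in> ?r" using rr by blast
  qed simp
  have cX: "countable (b ` key ` A)" using cnt by simp
  have sX: "b ` key ` A \<subseteq> A" using b by blast
  have "\<not> (\<forall>a\<in>A. \<exists>x\<in>b ` key ` A. (a, x) \<in> ?r)"
  proof
    assume "\<forall>a\<in>A. \<exists>x\<in>b ` key ` A. (a, x) \<in> ?r"
    hence "uncountable (b ` key ` A)" using mp[OF spec[OF cof', of "b ` key ` A"]] sX by blast
    thus False using cX by blast
  qed
  then obtain a where aA: "a \<in> A" and na: "\<And>x. x \<in> b ` key ` A \<Longrightarrow> (a, x) \<notin> ?r" by blast
  define S where "S = underS ?r a"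
  have PS: "|P k| \<le>o |S|" if "k \<in> key ` A" for k
  proof -
    have bk: "(a, b k) \<notin> ?r" using na that by blast
    have tot: "\<forall>x\<in>A. \<forall>y\<in>A. (x,y)\<in>?r \<or> (y,x)\<in>?r"
      using wo_rel.TOTALS[OF wo] by (simp only: Field_card_of)
    have "(b k, a) \<in> ?r" using tot aA b[of k] bk by blast
    have tr: "trans ?r" using wo_rel.TRANS[OF wo] .
    have "underS ?r (b k) \<subseteq> S"
    proof
      fix x assume "x \<in> underS ?r (b k)"
      hence x: "(x, b k) \<in> ?r" "x \<noteq> b k" unfolding underS_def by auto
      have "(x, a) \<in> ?r" using tr x(1) \<open>(b k, a) \<in> ?r\<close> unfolding trans_def by blast
      moreover have "x \<noteq> a" using x(1) bk by blast
      ultimately show "x \<in> S" unfolding S_def underS_def by auto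
    qed
    thus ?thesis by (rule ordLeq_transitive[OF bl[of k] card_of_mono1])
  qed
  have ex2: "\<exists>e. inj_on e (P k) \<and> e ` P k \<subseteq> S" if "k \<in> key ` A" for k
    by (subst card_of_ordLeq) (rule PS[OF that])
  have "\<forall>k. \<exists>e. k \<in> key ` A \<longrightarrow> inj_on e (P k) \<and> e ` P k \<subseteq> S"
  proof
    fix k show "\<exists>e. k \<in> key ` A \<longrightarrow> inj_on e (P k) \<and> e ` P k \<subseteq> S"
    proof (cases "k \<in> key ` A")
      case True
      from ex2[OF True] obtain e where "inj_on e (P k) \<and> e ` P k \<subseteq> S" by (elim exE)
      thus ?thesis by (intro exI impI)
    qed simp
  qed
  from choice[OF this] obtain e where ee: "\<forall>k. k \<in> key ` A \<longrightarrow> inj_on (e k) (P k) \<and> e k ` P k \<subseteq> S" by (elim exE)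
  have e1: "inj_on (e k) (P k)" if "k \<in> key ` A" for k using ee[rule_format, OF that] by (rule conjunct1)
  have e2: "e k ` P k \<subseteq> S" if "k \<in> key ` A" for k using ee[rule_format, OF that] by (rule conjunct2)
  have inj: "inj_on (\<lambda>x. (key x, e (key x) x)) A"
  proof (rule inj_onI)
    fix x y assume xy: "x \<in> A" "y \<in> A" "(key x, e (key x) x) = (key y, e (key y) y)"
    hence k: "key x = key y" by simp
    have "x \<in> P (key x)" "y \<in> P (key x)" unfolding P_def using xy k by auto
    moreover have "e (key x) x = e (key x) y" using xy k by simp
    ultimately show "x = y" using e1[of "key x"] xy(1) by (meson imageI inj_onD)
  qed
  have img: "(\<lambda>x. (key x, e (key x) x)) ` A \<subseteq> key ` A \<times> S"
  proof
    fix p assume "p \<in> (\<lambda>x. (key x, e (key x) x)) ` A"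
    then obtain x where x: "x \<in> A" "p = (key x, e (key x) x)" by blast
    have "x \<in> P (key x)" unfolding P_def using x by simp
    hence "e (key x) x \<in> S" using e2[of "key x"] x(1) by blast
    thus "p \<in> key ` A \<times> S" using x by simp
  qed
  have AS: "|A| \<le>o |key ` A \<times> S|"
    by (rule iffD1[OF card_of_ordLeq, OF exI, OF conjI[OF inj img]])
  have aF: "a \<in> Field ?r" using aA by (simp only: Field_card_of)
  have Sless: "|S| <o |A|" unfolding S_def
    by (rule card_of_underS[OF card_of_Card_order aF])
  show False
  proof (cases "finite S")
    case True
    hence "countable (key ` A \<times> S)" using cnt by (simp add: countable_finite)
    hence "|key ` A \<times> S| \<le>o |UNIV :: nat set|" by (simp only: countable_card_of_nat)
    hence "|A| \<le>o |UNIV :: nat set|" by (rule ordLeq_transitive[OF AS])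
    hence "countable A" by (simp only: countable_card_of_nat)
    thus False using uncA by blast
  next
    case False
    have "|key ` A| \<le>o |UNIV :: nat set|" using cnt by (simp only: countable_card_of_nat)
    moreover have "|UNIV :: nat set| \<le>o |S|" using False by (simp only: infinite_iff_card_of_nat)
    ultimately have le: "|key ` A| \<le>o |S|" by (rule ordLeq_transitive)
    have ne: "key ` A \<noteq> {}" using aA by blast
    have "|key ` A \<times> S| =o |S|" using card_of_Times_infinite[OF False ne le] by (rule conjunct2)
    hence "|A| \<le>o |S|" by (rule ordLeq_ordIso_trans[OF AS])
    thus False using Sless not_ordLess_ordLeq by blast
  qed
qed

lemma set_alg:
  assumes "Hx \<inter> N = {}" "Hy \<inter> N = {}" "Hz \<inter> N = {}" "U \<subseteq> N" "S \<subseteq> N"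
  shows "(Hx \<union> U) \<inter> (Hz \<union> U) - ((Hx \<union> U) \<inter> (Hy \<union> U))
       = (Hx \<union> S) \<inter> (Hz \<union> S) - ((Hx \<union> S) \<inter> (Hy \<union> S))"
  using assms by blast

lemma carrier_open: "psi_open \<A> (psi_carrier \<A>)"
  unfolding psi_open_def psi_carrier_def by (auto intro!: exI[of _ "{}"])

lemma topspace_Psi: "topspace (Psi \<A>) = psi_carrier \<A>"
proof
  show "topspace (Psi \<A>) \<subseteq> psi_carrier \<A>"
    using openin_topspace[of "Psi \<A>"] unfolding openin_Psi psi_open_def by blast
  show "psi_carrier \<A> \<subseteq> topspace (Psi \<A>)"
    using carrier_open[of \<A>] openin_subset[of "Psi \<A>"] unfolding openin_Psi by blast
qed

lemma open_Inl: "openin (Psi \<A>) {Inl n}"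
  unfolding openin_Psi psi_open_def psi_carrier_def by auto

lemma not_open_Inr:
  assumes "b \<in> \<A>" "infinite b"
  shows "\<not> openin (Psi \<A>) {Inr b}"
proof
  assume "openin (Psi \<A>) {Inr b}"
  hence "psi_open \<A> {Inr b}" by (simp add: openin_Psi)
  then obtain F where F: "finite F" "Inl ` (b - F) \<subseteq> {Inr b}"
    using assms(1) unfolding psi_open_def by blast
  hence "b - F = {}" by blast
  hence "b \<subseteq> F" by blast
  thus False using F(1) assms(2) finite_subset by blast
qed

lemma open_nbhd:
  assumes "a \<in> \<A>"
  shows "openin (Psi \<A>) (insert (Inr a) (Inl ` a))"
  unfolding openin_Psi psi_open_def psi_carrier_def using assms
  by (auto intro!: exI[of _ "{}"])

theorem proposition8:
  fixes \<A> \<B> :: "nat set set" and h :: "nat set \<Rightarrow> nat set"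
  assumes "uncountable_cof \<A>"
    and "AD_family \<A>" and "AD_family \<B>"
    and "(card_of \<B>, card_of \<A>) \<in> ordIso"
    and "bij_betw h \<A> \<B>"
    and "dense_oscillation \<A> h"
  shows "\<not> (\<exists>f. homeomorphic_map (Psi \<A>) (Psi \<B>) f \<and> (\<forall>a\<in>\<A>. f (Inr a) = Inr (h a)))"
proof
  assume "\<exists>f. homeomorphic_map (Psi \<A>) (Psi \<B>) f \<and> (\<forall>a\<in>\<A>. f (Inr a) = Inr (h a))"
  then obtain f where hm: "homeomorphic_map (Psi \<A>) (Psi \<B>) f"
    and ext: "\<And>a. a \<in> \<A> \<Longrightarrow> f (Inr a) = Inr (h a)" by blast
  have injf: "inj_on f (psi_carrier \<A>)"
    using homeomorphic_imp_injective_map[OF hm] by (simp add: topspace_Psi)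
  have surf: "f ` psi_carrier \<A> = psi_carrier \<B>"
    using homeomorphic_imp_surjective_map[OF hm] by (simp add: topspace_Psi)
  have om: "\<And>U. openin (Psi \<A>) U \<Longrightarrow> openin (Psi \<B>) (f ` U)"
    using homeomorphic_imp_open_map[OF hm] unfolding open_map_def by blast
  have cm: "continuous_map (Psi \<A>) (Psi \<B>) f" using homeomorphic_imp_continuous_map[OF hm] .
  have hB: "h a \<in> \<B>" if "a \<in> \<A>" for a using assms(5) that bij_betwE by blast
  have infB: "infinite b" if "b \<in> \<B>" for b using assms(3) that unfolding AD_family_def by blast
  have fl: "\<exists>m. f (Inl n) = Inl m" for n
  proof (cases "f (Inl n)")
    case (Inr b)
    have "Inl n \<in> psi_carrier \<A>" unfolding psi_carrier_def by simp
    hence "f (Inl n) \<in> psi_carrier \<B>" using surf by blast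
    hence bB: "b \<in> \<B>" using Inr unfolding psi_carrier_def by auto
    have "openin (Psi \<B>) (f ` {Inl n})" using om open_Inl by blast
    hence "openin (Psi \<B>) {Inr b}" using Inr by simp
    thus ?thesis using not_open_Inr[OF bB infB[OF bB]] by blast
  qed simp
  define g where "g n = projl (f (Inl n))" for n
  have fg: "f (Inl n) = Inl (g n)" for n using fl[of n] unfolding g_def by auto
  have injg: "inj g"
  proof (rule injI)
    fix x y assume "g x = g y"
    hence "f (Inl x) = f (Inl y)" using fg by simp
    moreover have "Inl x \<in> psi_carrier \<A>" "Inl y \<in> psi_carrier \<A>" unfolding psi_carrier_def by auto
    ultimately show "x = y" using injf inj_onD by fastforce
  qed
  have surjg: "\<exists>n. m = g n" for m
  proof -
    have "Inl m \<in> psi_carrier \<B>" unfolding psi_carrier_def by simp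
    then obtain p where p: "p \<in> psi_carrier \<A>" "f p = Inl m" using surf by (metis imageE)
    show ?thesis
    proof (cases p)
      case (Inl n) thus ?thesis using p fg by auto
    next
      case (Inr a)
      hence "a \<in> \<A>" using p unfolding psi_carrier_def by auto
      thus ?thesis using p Inr ext by simp
    qed
  qed
  have keyprop: "\<exists>n. g ` (a - {..<n}) = h a - g ` {..<n}" if aA: "a \<in> \<A>" for a
  proof -
    let ?U = "insert (Inr (h a)) (Inl ` h a)"
    have "openin (Psi \<B>) ?U" using open_nbhd hB[OF aA] by blast
    hence "openin (Psi \<A>) {x \<in> topspace (Psi \<A>). f x \<in> ?U}"
      using openin_continuous_map_preimage[OF cm] by blast
    hence po: "psi_open \<A> {x \<in> topspace (Psi \<A>). f x \<in> ?U}" by (simp add: openin_Psi)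
    have "Inr a \<in> {x \<in> topspace (Psi \<A>). f x \<in> ?U}"
      using aA ext[OF aA] by (simp add: topspace_Psi psi_carrier_def)
    then obtain F where F: "finite F" "Inl ` (a - F) \<subseteq> {x \<in> topspace (Psi \<A>). f x \<in> ?U}"
      using po aA unfolding psi_open_def by blast
    have F2: "g n \<in> h a" if "n \<in> a" "n \<notin> F" for n
    proof -
      have "f (Inl n) \<in> ?U" using F(2) that by blast
      thus ?thesis using fg by auto
    qed
    let ?V = "insert (Inr a) (Inl ` a)"
    have "openin (Psi \<B>) (f ` ?V)" using om open_nbhd[OF aA] by blast
    hence po2: "psi_open \<B> (f ` ?V)" by (simp add: openin_Psi)
    have "Inr (h a) \<in> f ` ?V" using ext[OF aA] by force
    then obtain G where G: "finite G" "Inl ` (h a - G) \<subseteq> f ` ?V"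
      using po2 hB[OF aA] unfolding psi_open_def by blast
    have G2: "\<exists>n\<in>a. m = g n" if "m \<in> h a" "m \<notin> G" for m
    proof -
      have "Inl m \<in> f ` ?V" using G(2) that by blast
      then obtain v where v: "v \<in> ?V" "Inl m = f v" by blast
      show ?thesis
      proof (cases "v = Inr a")
        case True thus ?thesis using v ext[OF aA] by simp
      next
        case False
        then obtain n where "n \<in> a" "v = Inl n" using v by blast
        thus ?thesis using v fg by auto
      qed
    qed
    have "finite (F \<union> g -` G)" using F(1) G(1) finite_vimageI[OF G(1) injg] by blast
    then obtain n where n: "F \<union> g -` G \<subseteq> {..<n}" using finite_nat_bounded by blast
    show ?thesis
    proof (rule exI[of _ n], rule set_eqI, rule iffI)
      fix m assume "m \<in> g ` (a - {..<n})"
      then obtain k where k: "k \<in> a" "k \<notin> {..<n}" "m = g k" by blast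
      have "g k \<in> h a" using F2 k n by blast
      moreover have "g k \<notin> g ` {..<n}" using k injg by (auto dest: injD)
      ultimately show "m \<in> h a - g ` {..<n}" unfolding k(3) by (rule DiffI)
    next
      fix m assume m: "m \<in> h a - g ` {..<n}"
      obtain k where k: "m = g k" using surjg by blast
      have kn: "k \<notin> {..<n}" using m k by blast
      hence "m \<notin> G" using n k by blast
      then obtain k' where "k' \<in> a" "m = g k'" using G2 m by blast
      hence "k' = k" using k injg by (auto dest: injD)
      thus "m \<in> g ` (a - {..<n})" using \<open>k' \<in> a\<close> k kn by blast
    qed
  qed
  define nn where "nn a = (SOME n. g ` (a - {..<n}) = h a - g ` {..<n})" for a
  have nnp: "g ` (a - {..<nn a}) = h a - g ` {..<nn a}" if "a \<in> \<A>" for a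
    unfolding nn_def using someI_ex[OF keyprop[OF that]] .
  define key where "key a = (nn a, a \<inter> {..<nn a}, h a \<inter> g ` {..<nn a})" for a
  have "key ` \<A> \<subseteq> (UNIV::nat set) \<times> (Collect finite :: nat set set) \<times> (Collect finite :: nat set set)"
    unfolding key_def by auto
  moreover have "countable ((UNIV::nat set) \<times> (Collect finite :: nat set set) \<times> (Collect finite :: nat set set))"
    by (intro countable_SIGMA countable_Collect_finite countableI_type)
  ultimately have "countable (key ` \<A>)" using countable_subset by blast
  from card_class[OF assms(1) this] obtain k where
    k: "( |{a\<in>\<A>. key a = k}|, |\<A>| ) \<in> ordIso" by blast
  let ?P = "{a\<in>\<A>. key a = k}"
  have "?P \<subseteq> \<A>" by blast
  then obtain x y z where xyz: "x \<in> ?P" "y \<in> ?P" "z \<in> ?P"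
    and ne: "( |(x \<inter> z) - (x \<inter> y)|, |(h x \<inter> h z) - (h x \<inter> h y)| ) \<notin> ordIso"
    using assms(6) k unfolding dense_oscillation_def by blast
  obtain n T S where kk: "k = (n, T, S)" by (cases k) auto
  have props: "g ` (a - {..<n}) = h a - g ` {..<n} \<and> a \<inter> {..<n} = T \<and> h a \<inter> g ` {..<n} = S"
    if "a \<in> ?P" for a
    using that nnp[of a] unfolding kk key_def by auto
  have ga: "g ` a = (h a - g ` {..<n}) \<union> g ` T" if "a \<in> ?P" for a
  proof -
    have "a = (a - {..<n}) \<union> (a \<inter> {..<n})" by blast
    hence "g ` a = g ` (a - {..<n}) \<union> g ` (a \<inter> {..<n})" by (metis image_Un)
    thus ?thesis using props[OF that] by simp
  qed
  have ha: "h a = (h a - g ` {..<n}) \<union> S" if "a \<in> ?P" for a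
    using props[OF that] by blast
  have TS: "g ` T \<subseteq> g ` {..<n}" "S \<subseteq> g ` {..<n}"
    using props[OF xyz(1)] by blast+
  have img: "g ` ((x \<inter> z) - (x \<inter> y)) = (g ` x \<inter> g ` z) - (g ` x \<inter> g ` y)"
    using injg by (simp add: image_Int image_set_diff)
  have eq: "g ` ((x \<inter> z) - (x \<inter> y)) = (h x \<inter> h z) - (h x \<inter> h y)"
  proof -
    define Hx where "Hx = h x - g ` {..<n}"
    define Hy where "Hy = h y - g ` {..<n}"
    define Hz where "Hz = h z - g ` {..<n}"
    have 1: "g ` x = Hx \<union> g ` T" "g ` y = Hy \<union> g ` T" "g ` z = Hz \<union> g ` T"
      using ga xyz unfolding Hx_def Hy_def Hz_def by blast+
    have 2: "h x = Hx \<union> S" "h y = Hy \<union> S" "h z = Hz \<union> S"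
      using ha xyz unfolding Hx_def Hy_def Hz_def by blast+
    have 3: "Hx \<inter> g ` {..<n} = {}" "Hy \<inter> g ` {..<n} = {}" "Hz \<inter> g ` {..<n} = {}"
      unfolding Hx_def Hy_def Hz_def by blast+
    show ?thesis unfolding img 1 2 by (rule set_alg[OF 3 TS])
  qed
  have "inj_on g ((x \<inter> z) - (x \<inter> y))" by (rule inj_on_subset[OF injg subset_UNIV])
  hence "bij_betw g ((x \<inter> z) - (x \<inter> y)) ((h x \<inter> h z) - (h x \<inter> h y))"
    unfolding bij_betw_def eq by (rule conjI) (rule refl)
  hence "( |(x \<inter> z) - (x \<inter> y)|, |(h x \<inter> h z) - (h x \<inter> h y)| ) \<in> ordIso"
    by (rule iffD1[OF card_of_ordIso exI])
  with ne show False by (rule notE)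
qed

end
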